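(* Let $(\gamma_n)_n$ and $(\delta_n)_n$ be widely separated sequences of sub-probability measures on $X\otimes\mathbb R^d$. If $f$ is bounded and continuous on $X$ and $W\in\mathfrak C_k$ for some $k\ge2$, then $$\lim_{n\to\infty}\Big|\int\prod_{i=1}^kf(x_i)\,W(y_1,\dots,y_k)\prod_{i=1}^k[\gamma_n+\delta_n](\mathrm dx_i,\mathrm dy_i)-\int\prod_{i=1}^kf(x_i)\,W\prod_{i=1}^k\gamma_n(\mathrm dx_i,\mathrm dy_i)-\int\prod_{i=1}^kf(x_i)\,W\prod_{i=1}^k\delta_n(\mathrm dx_i,\mathrm dy_i)\Big|=0.$$
   Context: $X$ is a complete separable metric space, $d\ge1$. For $k\ge2$, $\mathfrak C_k$ is the space of continuous functions $W$ on $(\mathbb R^d)^k$ with $W(y_1+a,\dots,y_k+a)=W(y_1,\dots,y_k)$ for all $a\in\mathbb R^d$ and $W(y_1,\dots,y_k)\to0$ as $\sup_{i,j}|y_i-y_j|\to\infty$. For a sub-probability measure $\gamma$ on $X\otimes\mathbb R^d$, $\gamma^{(2)}$ denotes its marginal on $\mathbb R^d$. Two sequences $(\gamma_n)$, $(\delta_n)$ of sub-probability measures on $X\otimes\mathbb R^d$ are widely separated if $\lim_{n\to\infty}\int V(y_1-y_2)\,\gamma_n^{(2)}(\mathrm dy_1)\,\delta_n^{(2)}(\mathrm dy_2)=0$ for some strictly positive continuous function $V$ on $\mathbb R^d$ tending to $0$ at infinity. *)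

theory Defs
  imports "HOL-Analysis.Analysis" "HOL-Probability.Probability"
begin

definition subprob_on :: "('a::topological_space \<times> 'b::topological_space) measure \<Rightarrow> bool" where
  "subprob_on M \<longleftrightarrow> sets M = sets borel \<and> subprob_space M"

definition add_measure :: "'a measure \<Rightarrow> 'a measure \<Rightarrow> 'a measure" where
  "add_measure M N = measure_of (space M) (sets M) (\<lambda>A. emeasure M A + emeasure N A)"

definition marg2 :: "('a::topological_space \<times> 'b::topological_space) measure \<Rightarrow> 'b measure" where
  "marg2 M = distr M borel snd"

definition widely_separated ::
  "(nat \<Rightarrow> ('a::topological_space \<times> 'b::euclidean_space) measure) \<Rightarrow> (nat \<Rightarrow> ('a \<times> 'b) measure) \<Rightarrow> bool" where
  "widely_separated \<gamma> \<delta> \<longleftrightarrow>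
     (\<exists>V :: 'b \<Rightarrow> real. continuous_on UNIV V \<and> (\<forall>y. V y > 0) \<and> (V \<longlongrightarrow> 0) at_infinity \<and>
        (\<lambda>n. \<integral>p. V (fst p - snd p) \<partial>(marg2 (\<gamma> n) \<Otimes>\<^sub>M marg2 (\<delta> n))) \<longlonglongrightarrow> 0)"

text \<open>The class C_k, with the k coordinates indexed by a finite type 'k (k = CARD('k)).\<close>
definition frakC :: "(('k::finite \<Rightarrow> 'b::euclidean_space) \<Rightarrow> real) \<Rightarrow> bool" where
  "frakC W \<longleftrightarrow> continuous_on UNIV W \<and>
     (\<forall>y a. W (\<lambda>i. y i + a) = W y) \<and>
     (\<forall>e>0. \<exists>R. \<forall>y. (\<exists>i j. dist (y i) (y j) > R) \<longrightarrow> \<bar>W y\<bar> < e)"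

end

theory Submission
  imports Defs
begin

lemma add_measure_sets:
  assumes "sets N = sets M"
  shows "sets (add_measure M N) = sets M" and "space (add_measure M N) = space M"
  unfolding add_measure_def
  by (simp_all add: sets.space_closed)

lemma add_measure_emeasure:
  assumes "sets N = sets M" "A \<in> sets M"
  shows "emeasure (add_measure M N) A = emeasure M A + emeasure N A"
  unfolding add_measure_def
proof (rule emeasure_measure_of_sigma)
  show "sigma_algebra (space M) (sets M)" by (rule sets.sigma_algebra_axioms)
  show "positive (sets M) (\<lambda>A. emeasure M A + emeasure N A)"
    by (simp add: positive_def)
  show "countably_additive (sets M) (\<lambda>A. emeasure M A + emeasure N A)"
  proof (rule countably_additiveI)
    fix A :: "nat \<Rightarrow> _" assume A: "range A \<subseteq> sets M" "disjoint_family A" "\<Union> (range A) \<in> sets M"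
    have "(\<Sum>i. emeasure M (A i) + emeasure N (A i)) = (\<Sum>i. emeasure M (A i)) + (\<Sum>i. emeasure N (A i))"
      by (rule suminf_add[symmetric]) auto
    also have "\<dots> = emeasure M (\<Union> (range A)) + emeasure N (\<Union> (range A))"
      using A assms by (simp add: suminf_emeasure)
    finally show "(\<Sum>i. emeasure M (A i) + emeasure N (A i)) = emeasure M (\<Union> (range A)) + emeasure N (\<Union> (range A))" .
  qed
qed (fact assms(2))

lemma split_density:
  fixes G D :: "'t measure"
  assumes sD: "sets D = sets G" and fG: "finite_measure G" and fD: "finite_measure D"
  shows "\<exists>p. p \<in> borel_measurable G \<and> (\<forall>x. 0 \<le> p x \<and> p x \<le> 1) \<and>
     G = density (add_measure G D) (\<lambda>x. ennreal (p x)) \<and>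
     D = density (add_measure G D) (\<lambda>x. ennreal (1 - p x))"
proof -
  define mu where "mu = add_measure G D"
  have smu: "sets mu = sets G" and spmu: "space mu = space G"
    using add_measure_sets[OF sD] by (auto simp: mu_def)
  have spD: "space D = space G" using sD by (rule sets_eq_imp_space_eq)
  have emu: "emeasure mu A = emeasure G A + emeasure D A" if "A \<in> sets G" for A
    using add_measure_emeasure[OF sD that] by (simp add: mu_def)
  have "finite_measure mu"
  proof (rule finite_measureI)
    show "emeasure mu (space mu) \<noteq> \<infinity>"
      using emu[of "space G"] spmu spD fG fD
      by (simp add: finite_measure.emeasure_finite)
  qed
  then interpret mu: finite_measure mu .
  have acG: "absolutely_continuous mu G"
    unfolding absolutely_continuous_def
  proof
    fix A assume "A \<in> null_sets mu"
    then have "A \<in> sets G" "emeasure mu A = 0" using smu by auto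
    then show "A \<in> null_sets G" using emu by auto
  qed
  have acD: "absolutely_continuous mu D"
    unfolding absolutely_continuous_def
  proof
    fix A assume "A \<in> null_sets mu"
    then have "A \<in> sets G" "emeasure mu A = 0" using smu by auto
    then show "A \<in> null_sets D" using emu sD by auto
  qed
  obtain g1 where g1: "g1 \<in> borel_measurable mu" "density mu g1 = G"
    using mu.Radon_Nikodym[OF acG] smu by auto
  obtain g2 where g2: "g2 \<in> borel_measurable mu" "density mu g2 = D"
    using mu.Radon_Nikodym[OF acD] smu sD by auto
  have "density mu (\<lambda>x. g1 x + g2 x) = density mu (\<lambda>_. 1)"
  proof (rule measure_eqI)
    show "sets (density mu (\<lambda>x. g1 x + g2 x)) = sets (density mu (\<lambda>_. 1))" by simp
    fix A assume "A \<in> sets (density mu (\<lambda>x. g1 x + g2 x))"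
    then have A: "A \<in> sets mu" by simp
    have "emeasure (density mu (\<lambda>x. g1 x + g2 x)) A = (\<integral>\<^sup>+x. g1 x * indicator A x + g2 x * indicator A x \<partial>mu)"
      using A g1 g2 by (simp add: emeasure_density distrib_right)
    also have "\<dots> = (\<integral>\<^sup>+x. g1 x * indicator A x \<partial>mu) + (\<integral>\<^sup>+x. g2 x * indicator A x \<partial>mu)"
      using A g1 g2 by (intro nn_integral_add) auto
    also have "\<dots> = emeasure G A + emeasure D A"
      using A g1 g2 by (simp add: emeasure_density[symmetric])
    also have "\<dots> = emeasure mu A" using A smu emu by simp
    finally show "emeasure (density mu (\<lambda>x. g1 x + g2 x)) A = emeasure (density mu (\<lambda>_. 1)) A"
      using A by (simp add: density_1)
  qed
  then have ae: "AE x in mu. g1 x + g2 x = 1"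
    using g1 g2 by (intro mu.density_unique) auto
  define p where "p x = enn2real (min (g1 x) 1)" for x
  have pm: "p \<in> borel_measurable mu" unfolding p_def using g1 by measurable
  have p01: "0 \<le> p x \<and> p x \<le> 1" for x
    unfolding p_def by (auto simp: enn2real_leI min_def)
  have ae1: "AE x in mu. g1 x = ennreal (p x)"
    using ae
  proof eventually_elim
    case (elim x)
    then have "g1 x \<le> 1" by (metis le_iff_add)
    then show ?case unfolding p_def
      by (metis ennreal_top_neq_one ennreal_enn2real_if min_def top.extremum_unique)
  qed
  have ae2: "AE x in mu. g2 x = ennreal (1 - p x)"
    using ae ae1
  proof eventually_elim
    case (elim x)
    then have "g2 x = 1 - ennreal (p x)"
      by (metis ennreal_add_diff_cancel_left ennreal_add_eq_top ennreal_top_neq_one)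
    then show ?case using p01[of x] by (metis ennreal_1 ennreal_minus)
  qed
  have "G = density mu (\<lambda>x. ennreal (p x))"
    proof -
    have "density mu g1 = density mu (\<lambda>x. ennreal (p x))"
      using g1 ae1 pm by (intro density_cong) auto
    then show ?thesis using g1 by simp
  qed
  moreover have "D = density mu (\<lambda>x. ennreal (1 - p x))"
    proof -
    have "density mu g2 = density mu (\<lambda>x. ennreal (1 - p x))"
      using g2 ae2 pm by (intro density_cong) auto
    then show ?thesis using g2 by simp
  qed
  moreover have "p \<in> borel_measurable G" using pm smu measurable_cong_sets by blast
  ultimately show ?thesis using p01 unfolding mu_def by blast
qed

lemma finite_measure_density_le1:
  assumes "finite_measure M" "h \<in> borel_measurable M" "\<And>x. 0 \<le> h x \<and> h x \<le> (1::real)"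
  shows "finite_measure (density M (\<lambda>x. ennreal (h x)))"
proof (rule finite_measureI)
  have "emeasure (density M (\<lambda>x. ennreal (h x))) (space M) = (\<integral>\<^sup>+x. ennreal (h x) * indicator (space M) x \<partial>M)"
    using assms(2) by (subst emeasure_density) auto
  also have "\<dots> \<le> (\<integral>\<^sup>+x. 1 * indicator (space M) x \<partial>M)"
  proof (rule nn_integral_mono)
    fix x
    have "ennreal (h x) \<le> 1" using assms(3)[of x] by simp
    then show "ennreal (h x) * indicator (space M) x \<le> 1 * indicator (space M) x"
      by (rule mult_right_mono) simp
  qed
  also have "\<dots> = emeasure M (space M)" by simp
  also have "\<dots> < \<infinity>" using finite_measure.emeasure_finite[OF assms(1)] by (simp add: less_top)
  finally have X: "emeasure (density M (\<lambda>x. ennreal (h x))) (space M) < \<infinity>" .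
  show "emeasure (density M (\<lambda>x. ennreal (h x))) (space (density M (\<lambda>x. ennreal (h x)))) \<noteq> \<infinity>"
    unfolding space_density using X by (rule less_imp_neq)
qed
lemma indicator_PiE_UNIV:
  "indicator (PiE (UNIV::'k::finite set) A) z = (\<Prod>i\<in>UNIV. indicator (A i) (z i) :: ennreal)"
proof (cases "z \<in> PiE UNIV A")
  case True then show ?thesis by (simp, intro prod.neutral) (auto simp: indicator_def)
next
  case False
  then obtain i where "z i \<notin> A i" by (auto simp: PiE_def)
  then have "(\<Prod>i\<in>UNIV. indicator (A i) (z i) :: ennreal) = 0"
    by (intro prod_zero bexI[of _ i]) auto
  then show ?thesis using False by simp
qed

lemma PiM_density:
  fixes M :: "'t measure" and h :: "'t \<Rightarrow> real"
  assumes fM: "finite_measure M" and hm: "h \<in> borel_measurable M" and h01: "\<And>x. 0 \<le> h x \<and> h x \<le> 1"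
  shows "PiM (UNIV::'k::finite set) (\<lambda>_. density M (\<lambda>x. ennreal (h x)))
       = density (PiM UNIV (\<lambda>_. M)) (\<lambda>z. ennreal (\<Prod>i\<in>UNIV. h (z i)))"
proof -
  interpret fD: finite_measure "density M (\<lambda>x. ennreal (h x))"
    by (rule finite_measure_density_le1[OF assms])
  interpret fM: finite_measure M by fact
  interpret PD: product_sigma_finite "\<lambda>_::'k. density M (\<lambda>x. ennreal (h x))"
    unfolding product_sigma_finite_def by (auto intro: fD.sigma_finite_measure_axioms)
  interpret PM: product_sigma_finite "\<lambda>_::'k. M"
    unfolding product_sigma_finite_def by (auto intro: fM.sigma_finite_measure_axioms)
  have "density (PiM UNIV (\<lambda>_. M)) (\<lambda>z. ennreal (\<Prod>i\<in>UNIV. h (z i)))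
        = PiM (UNIV::'k set) (\<lambda>_. density M (\<lambda>x. ennreal (h x)))"
  proof (rule PD.PiM_eqI)
    show "sets (density (PiM UNIV (\<lambda>_. M)) (\<lambda>z. ennreal (\<Prod>i\<in>UNIV. h (z i))))
        = sets (PiM (UNIV::'k set) (\<lambda>_. density M (\<lambda>x. ennreal (h x))))"
      by (simp add: sets_PiM_cong[OF refl sets_density])
    fix A :: "'k \<Rightarrow> 't set" assume A: "\<And>i. i \<in> UNIV \<Longrightarrow> A i \<in> sets (density M (\<lambda>x. ennreal (h x)))"
    then have A': "\<And>i. A i \<in> sets M" by simp
    have hmeas: "(\<lambda>z. ennreal (\<Prod>i\<in>UNIV. h (z i))) \<in> borel_measurable (PiM (UNIV::'k set) (\<lambda>_. M))"
      using hm by measurable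
    have "emeasure (density (PiM UNIV (\<lambda>_. M)) (\<lambda>z. ennreal (\<Prod>i\<in>UNIV. h (z i)))) (PiE UNIV A)
        = (\<integral>\<^sup>+z. ennreal (\<Prod>i\<in>UNIV. h (z i)) * indicator (PiE UNIV A) z \<partial>PiM UNIV (\<lambda>_. M))"
      using A' hmeas by (intro emeasure_density) (auto intro!: sets_PiM_I_finite)
    also have "\<dots> = (\<integral>\<^sup>+z. (\<Prod>i\<in>UNIV. ennreal (h (z i)) * indicator (A i) (z i)) \<partial>PiM UNIV (\<lambda>_. M))"
      using h01 by (intro nn_integral_cong) (simp add: indicator_PiE_UNIV prod.distrib prod_ennreal)
    also have "\<dots> = (\<Prod>i\<in>UNIV. (\<integral>\<^sup>+x. ennreal (h x) * indicator (A i) x \<partial>M))"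
      using A' hm by (intro PM.product_nn_integral_prod) auto
    also have "\<dots> = (\<Prod>i\<in>UNIV. emeasure (density M (\<lambda>x. ennreal (h x))) (A i))"
      using A' hm by (intro prod.cong refl) (simp add: emeasure_density)
    finally show "emeasure (density (PiM UNIV (\<lambda>_. M)) (\<lambda>z. ennreal (\<Prod>i\<in>UNIV. h (z i)))) (PiE UNIV A)
        = (\<Prod>i\<in>UNIV. emeasure (density M (\<lambda>x. ennreal (h x))) (A i))" .
  qed simp
  then show ?thesis by simp
qed

lemma finite_measure_PiM_UNIV:
  assumes "finite_measure M"
  shows "finite_measure (PiM (UNIV::'k::finite set) (\<lambda>_. M))"
proof -
  interpret fM: finite_measure M by fact
  interpret PM: product_sigma_finite "\<lambda>_::'k. M"
    unfolding product_sigma_finite_def by (auto intro: fM.sigma_finite_measure_axioms)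
  show ?thesis
  proof (rule finite_measureI)
    have "emeasure (PiM (UNIV::'k set) (\<lambda>_. M)) (space (PiM (UNIV::'k set) (\<lambda>_. M)))
        = (\<Prod>i\<in>(UNIV::'k set). emeasure M (space M))"
      unfolding space_PiM by (rule PM.emeasure_PiM) auto
    also have "\<dots> < \<infinity>" using fM.emeasure_finite[of "space M"]
      by (simp add: prod_constant power_less_top_ennreal less_top del: fM.emeasure_finite)
    finally show "emeasure (PiM (UNIV::'k set) (\<lambda>_. M)) (space (PiM (UNIV::'k set) (\<lambda>_. M))) \<noteq> \<infinity>"
      by (rule less_imp_neq)
  qed
qed

lemma marginal_pair_nn:
  fixes M :: "'t measure" and F :: "'t \<Rightarrow> 't \<Rightarrow> ennreal"
  assumes fM: "finite_measure M"
    and Fm: "(\<lambda>u. F (fst u) (snd u)) \<in> borel_measurable (M \<Otimes>\<^sub>M M)"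
    and ab: "a \<noteq> b"
  shows "(\<integral>\<^sup>+z. F (z a) (z b) \<partial>PiM (UNIV::'k::finite set) (\<lambda>_. M))
       = emeasure M (space M) ^ (CARD('k) - 2) * (\<integral>\<^sup>+u. F (fst u) (snd u) \<partial>(M \<Otimes>\<^sub>M M))"
proof -
  interpret fM: finite_measure M by fact
  interpret PM: product_sigma_finite "\<lambda>_::'k. M"
    unfolding product_sigma_finite_def by (auto intro: fM.sigma_finite_measure_axioms)
  define I where "I = {a, b}"
  define J where "J = UNIV - I"
  have IJ: "I \<inter> J = {}" "finite I" "finite J" "I \<union> J = UNIV" by (auto simp: I_def J_def)
  have Fm2: "(\<lambda>z. F (z a) (z b)) \<in> borel_measurable (PiM (I \<union> J) (\<lambda>_. M))"
  proof -
    have "(\<lambda>z. (z a, z b)) \<in> measurable (PiM (I \<union> J) (\<lambda>_. M)) (M \<Otimes>\<^sub>M M)"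
      using IJ(4) by (intro measurable_Pair measurable_component_singleton) auto
    from measurable_compose[OF this Fm] show ?thesis by simp
  qed
  have cJ: "card J = CARD('k) - 2"
    unfolding J_def I_def using ab by (simp add: card_Diff_subset)
  have eJ: "emeasure (PiM J (\<lambda>_. M)) (space (PiM J (\<lambda>_. M))) = emeasure M (space M) ^ (CARD('k) - 2)"
    unfolding space_PiM using IJ cJ by (subst PM.emeasure_PiM) (auto simp: prod_constant)
  have "(\<integral>\<^sup>+z. F (z a) (z b) \<partial>PiM (UNIV::'k set) (\<lambda>_. M))
      = (\<integral>\<^sup>+z. F (z a) (z b) \<partial>PiM (I \<union> J) (\<lambda>_. M))" using IJ(4) by simp
  also have "\<dots> = (\<integral>\<^sup>+x. (\<integral>\<^sup>+y. F (merge I J (x, y) a) (merge I J (x, y) b) \<partial>PiM J (\<lambda>_. M)) \<partial>PiM I (\<lambda>_. M))"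
    by (rule PM.product_nn_integral_fold[OF IJ(1-3) Fm2])
  also have "\<dots> = (\<integral>\<^sup>+x. F (x a) (x b) * emeasure M (space M) ^ (CARD('k) - 2) \<partial>PiM I (\<lambda>_. M))"
    by (intro nn_integral_cong) (simp add: merge_def I_def eJ)
  also have "\<dots> = emeasure M (space M) ^ (CARD('k) - 2) * (\<integral>\<^sup>+x. F (x a) (x b) \<partial>PiM I (\<lambda>_. M))"
  proof -
    have "(\<lambda>z. (z a, z b)) \<in> measurable (PiM I (\<lambda>_. M)) (M \<Otimes>\<^sub>M M)"
      unfolding I_def by (intro measurable_Pair measurable_component_singleton) auto
    from measurable_compose[OF this Fm] have "(\<lambda>x. F (x a) (x b)) \<in> borel_measurable (PiM I (\<lambda>_. M))" by simp
    then show ?thesis by (subst nn_integral_multc) (auto simp: mult.commute)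
  qed
  also have "(\<integral>\<^sup>+x. F (x a) (x b) \<partial>PiM I (\<lambda>_. M)) = (\<integral>\<^sup>+u. F (fst u) (snd u) \<partial>(M \<Otimes>\<^sub>M M))"
    unfolding I_def using Fm ab by (intro PM.product_nn_integral_pair) auto
  finally show ?thesis .
qed

lemma pair_density_nn:
  fixes M :: "'t measure" and P Q :: "'t \<Rightarrow> ennreal" and g :: "'t \<Rightarrow> 't \<Rightarrow> ennreal"
  assumes fM: "finite_measure M" and fP: "finite_measure (density M P)" and fQ: "finite_measure (density M Q)"
    and Pm[measurable]: "P \<in> borel_measurable M" and Qm[measurable]: "Q \<in> borel_measurable M"
    and gm[measurable]: "(\<lambda>u. g (fst u) (snd u)) \<in> borel_measurable (M \<Otimes>\<^sub>M M)"
  shows "(\<integral>\<^sup>+u. P (fst u) * Q (snd u) * g (fst u) (snd u) \<partial>(M \<Otimes>\<^sub>M M))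
       = (\<integral>\<^sup>+u. g (fst u) (snd u) \<partial>(density M P \<Otimes>\<^sub>M density M Q))"
proof -
  interpret fM: finite_measure M by fact
  interpret fP: finite_measure "density M P" by fact
  interpret fQ: finite_measure "density M Q" by fact
  have gm': "(\<lambda>u. g (fst u) (snd u)) \<in> borel_measurable (density M P \<Otimes>\<^sub>M density M Q)"
    proof -
    have "sets (density M P \<Otimes>\<^sub>M density M Q) = sets (M \<Otimes>\<^sub>M M)"
      by (rule sets_pair_measure_cong) simp_all
    from measurable_cong_sets[OF this refl, of borel] gm show ?thesis by simp
  qed
  have gx[measurable]: "(\<lambda>y. g x y) \<in> borel_measurable M" if "x \<in> space M" for x
    using measurable_Pair2[OF gm that] by (simp only: fst_conv snd_conv)
  have "(\<integral>\<^sup>+u. P (fst u) * Q (snd u) * g (fst u) (snd u) \<partial>(M \<Otimes>\<^sub>M M))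
      = (\<integral>\<^sup>+x. (\<integral>\<^sup>+y. P x * Q y * g x y \<partial>M) \<partial>M)"
  proof -
    have m: "(\<lambda>u. P (fst u) * Q (snd u) * g (fst u) (snd u)) \<in> borel_measurable (M \<Otimes>\<^sub>M M)"
      by measurable
    show ?thesis using fM.nn_integral_fst[OF m, symmetric] by (simp only: fst_conv snd_conv)
  qed
  also have "\<dots> = (\<integral>\<^sup>+x. P x * (\<integral>\<^sup>+y. g x y \<partial>density M Q) \<partial>M)"
  proof (intro nn_integral_cong)
    fix x assume x: "x \<in> space M"
    have "(\<integral>\<^sup>+y. P x * Q y * g x y \<partial>M) = P x * (\<integral>\<^sup>+y. Q y * g x y \<partial>M)"
    proof -
      have "(\<lambda>y. Q y * g x y) \<in> borel_measurable M" using x by measurable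
      from nn_integral_cmult[OF this, of "P x"] show ?thesis by (simp only: mult.assoc)
    qed
    also have "\<dots> = P x * (\<integral>\<^sup>+y. g x y \<partial>density M Q)"
      using nn_integral_density[OF Qm gx[OF x], symmetric] by simp
    finally show "(\<integral>\<^sup>+y. P x * Q y * g x y \<partial>M) = P x * (\<integral>\<^sup>+y. g x y \<partial>density M Q)" .
  qed
  also have "\<dots> = (\<integral>\<^sup>+x. (\<integral>\<^sup>+y. g x y \<partial>density M Q) \<partial>density M P)"
  proof (rule nn_integral_density[symmetric])
    show "P \<in> borel_measurable M" by simp
    have "(\<lambda>x. \<integral>\<^sup>+y. g (fst (x, y)) (snd (x, y)) \<partial>density M Q) \<in> borel_measurable (density M P)"
      by (rule fQ.borel_measurable_nn_integral_fst[OF gm'])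
    then show "(\<lambda>x. \<integral>\<^sup>+y. g x y \<partial>density M Q) \<in> borel_measurable M" by simp
  qed
  also have "\<dots> = (\<integral>\<^sup>+u. g (fst u) (snd u) \<partial>(density M P \<Otimes>\<^sub>M density M Q))"
    using fQ.nn_integral_fst[OF gm'] by simp
  finally show ?thesis .
qed

lemma snd_meas_borel:
  fixes M :: "('a::second_countable_topology \<times> 'b::second_countable_topology) measure"
  assumes "sets M = sets borel"
  shows "snd \<in> borel_measurable M" "fst \<in> borel_measurable M"
proof -
  show "snd \<in> borel_measurable M"
    by (subst measurable_cong_sets[OF assms refl]) (intro borel_measurable_continuous_onI continuous_on_snd continuous_on_id)
  show "fst \<in> borel_measurable M"
    by (subst measurable_cong_sets[OF assms refl]) (intro borel_measurable_continuous_onI continuous_on_fst continuous_on_id)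
qed

lemma to_marg2:
  fixes G D :: "('a::second_countable_topology \<times> 'b::euclidean_space) measure" and V :: "'b \<Rightarrow> real"
  assumes sG: "sets G = sets borel" and sD: "sets D = sets borel"
    and fG: "finite_measure G" and fD: "finite_measure D"
    and Vm[measurable]: "V \<in> borel_measurable borel"
  shows "(\<integral>\<^sup>+u. ennreal (V (snd (fst u) - snd (snd u))) \<partial>(G \<Otimes>\<^sub>M D))
       = (\<integral>\<^sup>+w. ennreal (V (fst w - snd w)) \<partial>(marg2 G \<Otimes>\<^sub>M marg2 D))"
proof -
  have sGm: "snd \<in> G \<rightarrow>\<^sub>M borel" using snd_meas_borel[OF sG] by simp
  have sDm: "snd \<in> D \<rightarrow>\<^sub>M borel" using snd_meas_borel[OF sD] by simp
  have "sigma_finite_measure (marg2 D)"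
    unfolding marg2_def using finite_measure.finite_measure_distr[OF fD sDm]
    by (rule finite_measure.sigma_finite_measure)
  then have eq: "marg2 G \<Otimes>\<^sub>M marg2 D = distr (G \<Otimes>\<^sub>M D) (borel \<Otimes>\<^sub>M borel) (\<lambda>(x, y). (snd x, snd y))"
    unfolding marg2_def by (rule pair_measure_distr[OF sGm sDm])
  have Tm: "(\<lambda>(x, y). (snd x, snd y)) \<in> (G \<Otimes>\<^sub>M D) \<rightarrow>\<^sub>M (borel \<Otimes>\<^sub>M borel :: ('b \<times> 'b) measure)"
    using sGm sDm by measurable
  have fm: "(\<lambda>w. ennreal (V (fst w - snd w))) \<in> borel_measurable (borel \<Otimes>\<^sub>M borel :: ('b \<times> 'b) measure)"
    by measurable
  have fm': "(\<lambda>w. ennreal (V (fst w - snd w))) \<in> borel_measurable (distr (G \<Otimes>\<^sub>M D) (borel \<Otimes>\<^sub>M borel) (\<lambda>(x, y). (snd x, snd y)))"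
    by (subst measurable_cong_sets[OF sets_distr refl]) (rule fm)
  show ?thesis unfolding eq
    by (subst nn_integral_distr[OF Tm fm']) (simp add: case_prod_beta)
qed

lemma term_eq:
  fixes G D mu :: "('a::polish_space \<times> 'b::euclidean_space) measure" and p :: "'a \<times> 'b \<Rightarrow> real" and V :: "'b \<Rightarrow> real"
  assumes smu: "sets mu = sets borel" and fmu: "finite_measure mu"
    and pm: "p \<in> borel_measurable mu" and p01: "\<And>x. 0 \<le> p x \<and> p x \<le> 1"
    and Gd: "G = density mu (\<lambda>x. ennreal (p x))" and Dd: "D = density mu (\<lambda>x. ennreal (1 - p x))"
    and Vc: "continuous_on UNIV V" and V0: "\<And>y. 0 \<le> V y" and Vb: "\<And>y. V y \<le> Mv"
    and ab: "a \<noteq> b"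
  shows "(\<integral>z. p (z a) * (1 - p (z b)) * V (snd (z a) - snd (z b)) \<partial>PiM (UNIV::'k::finite set) (\<lambda>_. mu))
       = measure mu (space mu) ^ (CARD('k) - 2) * (\<integral>w. V (fst w - snd w) \<partial>(marg2 G \<Otimes>\<^sub>M marg2 D))"
proof -
  define F where "F x y = p x * (1 - p y) * V (snd x - snd y)" for x y
  have F0: "0 \<le> F x y" for x y unfolding F_def using p01[of x] p01[of y] V0 by simp
  have Fb: "F x y \<le> Mv" for x y
  proof -
    have "F x y \<le> 1 * 1 * V (snd x - snd y)" unfolding F_def
      using p01[of x] p01[of y] V0 by (intro mult_right_mono mult_mono) auto
    also have "\<dots> \<le> Mv" using Vb by simp
    finally show ?thesis .
  qed
  note [measurable] = pm snd_meas_borel[OF smu]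
  have Vm[measurable]: "V \<in> borel_measurable borel" using Vc by (rule borel_measurable_continuous_onI)
  have Fm: "(\<lambda>u. F (fst u) (snd u)) \<in> borel_measurable (mu \<Otimes>\<^sub>M mu)" unfolding F_def by measurable
  have FPm: "(\<lambda>z. F (z a) (z b)) \<in> borel_measurable (PiM (UNIV::'k set) (\<lambda>_. mu))" unfolding F_def by measurable
  interpret fP: finite_measure "PiM (UNIV::'k set) (\<lambda>_. mu)" by (rule finite_measure_PiM_UNIV[OF fmu])
  interpret fmu: finite_measure mu by fact
  have intP: "integrable (PiM (UNIV::'k set) (\<lambda>_. mu)) (\<lambda>z. F (z a) (z b))"
    using FPm F0 Fb by (intro fP.integrable_const_bound[where B=Mv]) auto
  have sG: "sets G = sets borel" and sD: "sets D = sets borel" using Gd Dd smu by auto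
  have fG: "finite_measure G" unfolding Gd using fmu pm p01 by (rule finite_measure_density_le1)
  have fD: "finite_measure D" unfolding Dd using fmu pm p01 by (intro finite_measure_density_le1) auto
  have sGm: "snd \<in> G \<rightarrow>\<^sub>M borel" using snd_meas_borel[OF sG] by simp
  have sDm: "snd \<in> D \<rightarrow>\<^sub>M borel" using snd_meas_borel[OF sD] by simp
  interpret fM2: finite_measure "marg2 G \<Otimes>\<^sub>M marg2 D"
    unfolding marg2_def
    by (intro finite_measure_pair_measure finite_measure.finite_measure_distr fG fD sGm sDm)
  have intM2: "integrable (marg2 G \<Otimes>\<^sub>M marg2 D) (\<lambda>w. V (fst w - snd w))"
  proof -
    have s2: "sets (marg2 G \<Otimes>\<^sub>M marg2 D) = sets (borel \<Otimes>\<^sub>M borel)"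
      unfolding marg2_def by (intro sets_pair_measure_cong) simp_all
    have "(\<lambda>w. V (fst w - snd w)) \<in> borel_measurable (marg2 G \<Otimes>\<^sub>M marg2 D)"
      by (subst measurable_cong_sets[OF s2 refl]) measurable
    then show ?thesis using V0 Vb by (intro fM2.integrable_const_bound[where B=Mv]) auto
  qed
  have "ennreal (\<integral>z. F (z a) (z b) \<partial>PiM (UNIV::'k set) (\<lambda>_. mu))
      = (\<integral>\<^sup>+z. ennreal (F (z a) (z b)) \<partial>PiM (UNIV::'k set) (\<lambda>_. mu))"
    using intP F0 by (intro nn_integral_eq_integral[symmetric]) auto
  also have "\<dots> = emeasure mu (space mu) ^ (CARD('k) - 2) * (\<integral>\<^sup>+u. ennreal (F (fst u) (snd u)) \<partial>(mu \<Otimes>\<^sub>M mu))"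
    using fmu _ ab by (rule marginal_pair_nn) (use Fm in measurable)
  also have "(\<integral>\<^sup>+u. ennreal (F (fst u) (snd u)) \<partial>(mu \<Otimes>\<^sub>M mu))
     = (\<integral>\<^sup>+u. ennreal (p (fst u)) * ennreal (1 - p (snd u)) * ennreal (V (snd (fst u) - snd (snd u))) \<partial>(mu \<Otimes>\<^sub>M mu))"
    unfolding F_def using p01 V0 by (intro nn_integral_cong) (simp add: ennreal_mult)
  also have "\<dots> = (\<integral>\<^sup>+u. ennreal (V (snd (fst u) - snd (snd u))) \<partial>(G \<Otimes>\<^sub>M D))"
    unfolding Gd Dd
    by (rule pair_density_nn[where g="\<lambda>x y. ennreal (V (snd x - snd y))", OF fmu]) 
       (use fG fD Gd Dd in \<open>simp_all\<close>, measurable)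
  also have "\<dots> = (\<integral>\<^sup>+w. ennreal (V (fst w - snd w)) \<partial>(marg2 G \<Otimes>\<^sub>M marg2 D))"
    by (rule to_marg2[OF sG sD fG fD Vm])
  also have "\<dots> = ennreal (\<integral>w. V (fst w - snd w) \<partial>(marg2 G \<Otimes>\<^sub>M marg2 D))"
    using intM2 V0 by (intro nn_integral_eq_integral) auto
  finally have "ennreal (\<integral>z. F (z a) (z b) \<partial>PiM (UNIV::'k set) (\<lambda>_. mu))
     = ennreal (measure mu (space mu) ^ (CARD('k) - 2) * (\<integral>w. V (fst w - snd w) \<partial>(marg2 G \<Otimes>\<^sub>M marg2 D)))"
    using V0 by (simp add: fmu.emeasure_eq_measure ennreal_mult'' ennreal_power integral_nonneg)
  then have "(\<integral>z. F (z a) (z b) \<partial>PiM (UNIV::'k set) (\<lambda>_. mu))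
     = measure mu (space mu) ^ (CARD('k) - 2) * (\<integral>w. V (fst w - snd w) \<partial>(marg2 G \<Otimes>\<^sub>M marg2 D))"
    using F0 V0 by (subst (asm) ennreal_inj) (auto intro!: integral_nonneg)
  then show ?thesis unfolding F_def .
qed

lemma union_bound_prod:
  fixes a :: "'i \<Rightarrow> real"
  assumes "finite J" "\<And>j. 0 \<le> a j \<and> a j \<le> 1"
  shows "1 - (\<Prod>j\<in>J. a j) \<le> (\<Sum>j\<in>J. 1 - a j)"
  using assms(1)
proof (induction J rule: finite_induct)
  case empty then show ?case by simp
next
  case (insert x J)
  have P01: "0 \<le> (\<Prod>j\<in>J. a j)" "(\<Prod>j\<in>J. a j) \<le> 1"
    using assms(2) by (auto intro: prod_nonneg prod_le_1)
  have "1 - a x * (\<Prod>j\<in>J. a j) \<le> (1 - a x) + (1 - (\<Prod>j\<in>J. a j))"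
  proof -
    have "0 \<le> (1 - a x) * (1 - (\<Prod>j\<in>J. a j))" using assms(2)[of x] P01 by (intro mult_nonneg_nonneg) auto
    moreover have "(1 - a x) * (1 - (\<Prod>j\<in>J. a j)) = 1 - a x - (\<Prod>j\<in>J. a j) + a x * (\<Prod>j\<in>J. a j)"
      by (simp add: algebra_simps)
    ultimately show ?thesis by linarith
  qed
  then show ?case using insert by simp
qed

lemma comb_bound:
  fixes a :: "'i \<Rightarrow> real"
  assumes fin: "finite I" and x0: "x0 \<in> I" and a01: "\<And>i. 0 \<le> a i \<and> a i \<le> 1"
  shows "0 \<le> 1 - (\<Prod>i\<in>I. a i) - (\<Prod>i\<in>I. 1 - a i)"
    and "1 - (\<Prod>i\<in>I. a i) - (\<Prod>i\<in>I. 1 - a i) \<le> (\<Sum>j\<in>I - {x0}. a x0 * (1 - a j) + (1 - a x0) * a j)"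
proof -
  define J where "J = I - {x0}"
  have fJ: "finite J" using fin by (simp add: J_def)
  have I: "I = insert x0 J" "x0 \<notin> J" using x0 by (auto simp: J_def)
  define P where "P = (\<Prod>j\<in>J. a j)"
  define Q where "Q = (\<Prod>j\<in>J. 1 - a j)"
  have P01: "0 \<le> P" "P \<le> 1" unfolding P_def using a01 by (auto intro: prod_nonneg prod_le_1)
  have Q01: "0 \<le> Q" "Q \<le> 1" unfolding Q_def using a01 by (auto intro: prod_nonneg prod_le_1)
  have eqP: "(\<Prod>i\<in>I. a i) = a x0 * P" unfolding P_def using I fJ by simp
  have eqQ: "(\<Prod>i\<in>I. 1 - a i) = (1 - a x0) * Q" unfolding Q_def using I fJ by simp
  have ub1: "1 - P \<le> (\<Sum>j\<in>J. 1 - a j)" unfolding P_def using fJ a01 by (rule union_bound_prod)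
  have ub2: "1 - Q \<le> (\<Sum>j\<in>J. a j)"
    unfolding Q_def using union_bound_prod[OF fJ, of "\<lambda>j. 1 - a j"] a01 by simp
  show "0 \<le> 1 - (\<Prod>i\<in>I. a i) - (\<Prod>i\<in>I. 1 - a i)"
  proof -
    have "a x0 * P \<le> a x0" using a01[of x0] P01 by (intro mult_left_le) auto
    moreover have "(1 - a x0) * Q \<le> 1 - a x0" using a01[of x0] Q01 by (intro mult_left_le) auto
    ultimately show ?thesis unfolding eqP eqQ by linarith
  qed
  have "1 - (\<Prod>i\<in>I. a i) - (\<Prod>i\<in>I. 1 - a i) = a x0 * (1 - P) + (1 - a x0) * (1 - Q)"
    unfolding eqP eqQ by (simp add: algebra_simps)
  also have "\<dots> \<le> a x0 * (\<Sum>j\<in>J. 1 - a j) + (1 - a x0) * (\<Sum>j\<in>J. a j)"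
    using a01[of x0] ub1 ub2 by (intro add_mono mult_left_mono) auto
  also have "\<dots> = (\<Sum>j\<in>I - {x0}. a x0 * (1 - a j) + (1 - a x0) * a j)"
    unfolding J_def by (simp add: sum.distrib sum_distrib_left)
  finally show "1 - (\<Prod>i\<in>I. a i) - (\<Prod>i\<in>I. 1 - a i) \<le> (\<Sum>j\<in>I - {x0}. a x0 * (1 - a j) + (1 - a x0) * a j)" .
qed

lemma measure_PiM_UNIV:
  assumes "finite_measure M"
  shows "measure (PiM (UNIV::'k::finite set) (\<lambda>_. M)) (space (PiM (UNIV::'k set) (\<lambda>_. M)))
       = measure M (space M) ^ CARD('k)"
proof -
  interpret fM: finite_measure M by fact
  interpret PM: product_sigma_finite "\<lambda>_::'k. M"
    unfolding product_sigma_finite_def by (auto intro: fM.sigma_finite_measure_axioms)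
  have "emeasure (PiM (UNIV::'k set) (\<lambda>_. M)) (space (PiM (UNIV::'k set) (\<lambda>_. M)))
        = (\<Prod>i\<in>(UNIV::'k set). emeasure M (space M))"
    unfolding space_PiM by (rule PM.emeasure_PiM) auto
  also have "\<dots> = ennreal (measure M (space M) ^ CARD('k))"
    by (simp add: prod_constant fM.emeasure_eq_measure ennreal_power)
  finally show ?thesis by (simp add: measure_def)
qed

lemma Gf_measurable:
  fixes M :: "('a::polish_space \<times> 'b::euclidean_space) measure" and f :: "'a \<Rightarrow> real" and W :: "('k::finite \<Rightarrow> 'b) \<Rightarrow> real"
  assumes sM: "sets M = sets borel" and fc: "continuous_on UNIV f" and Wc: "continuous_on UNIV W"
  shows "(\<lambda>z. (\<Prod>i\<in>UNIV. f (fst (z i))) * W (\<lambda>i. snd (z i))) \<in> borel_measurable (PiM (UNIV::'k set) (\<lambda>_. M))"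
proof -
  note [measurable] = snd_meas_borel[OF sM]
  have fm[measurable]: "f \<in> borel_measurable borel" using fc by (rule borel_measurable_continuous_onI)
  have Wm[measurable]: "W \<in> borel_measurable borel" using Wc by (rule borel_measurable_continuous_onI)
  have sn[measurable]: "(\<lambda>z i. snd (z i)) \<in> borel_measurable (PiM (UNIV::'k set) (\<lambda>_. M))"
    by (rule measurable_coordinatewise_then_product) measurable
  show ?thesis by measurable
qed

lemma pointwise_bound:
  fixes pz fz :: "'k::finite \<Rightarrow> real" and w :: real and v :: "'k \<Rightarrow> 'k \<Rightarrow> real"
  assumes p01: "\<And>i. 0 \<le> pz i \<and> pz i \<le> 1" and fb: "\<And>i. \<bar>fz i\<bar> \<le> Bf"
    and wv: "\<And>a b. \<bar>w\<bar> \<le> e + C * v a b" and v0: "\<And>a b. 0 \<le> v a b" and e: "0 \<le> e" and C: "0 \<le> C"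
  shows "\<bar>(1 - (\<Prod>i\<in>UNIV. pz i) - (\<Prod>i\<in>UNIV. 1 - pz i)) * ((\<Prod>i\<in>UNIV. fz i) * w)\<bar>
    \<le> (\<Sum>j\<in>UNIV - {x0}. Bf ^ CARD('k) * (2 * e) + Bf ^ CARD('k) * C * (pz x0 * (1 - pz j) * v x0 j)
                          + Bf ^ CARD('k) * C * (pz j * (1 - pz x0) * v j x0))"
proof -
  define S where "S = 1 - (\<Prod>i\<in>UNIV. pz i) - (\<Prod>i\<in>UNIV. 1 - pz i)"
  have S0: "0 \<le> S" unfolding S_def using comb_bound(1)[of UNIV x0 pz] p01 by auto
  have Sb: "S \<le> (\<Sum>j\<in>UNIV - {x0}. pz x0 * (1 - pz j) + (1 - pz x0) * pz j)"
    unfolding S_def using comb_bound(2)[of UNIV x0 pz] p01 by auto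
  have Bf0: "0 \<le> Bf" using fb[of x0] by linarith
  have fB: "\<bar>\<Prod>i\<in>UNIV. fz i\<bar> \<le> Bf ^ CARD('k)"
    unfolding abs_prod using fb by (subst prod_constant[symmetric]) (intro prod_mono, auto)
  have "\<bar>S * ((\<Prod>i\<in>UNIV. fz i) * w)\<bar> = \<bar>\<Prod>i\<in>UNIV. fz i\<bar> * (S * \<bar>w\<bar>)"
    using S0 by (simp add: abs_mult)
  also have "\<dots> \<le> Bf ^ CARD('k) * (S * \<bar>w\<bar>)"
    using fB S0 by (intro mult_right_mono) auto
  also have "S * \<bar>w\<bar> \<le> (\<Sum>j\<in>UNIV - {x0}. pz x0 * (1 - pz j) + (1 - pz x0) * pz j) * \<bar>w\<bar>"
    using Sb by (intro mult_right_mono) auto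
  also have "\<dots> = (\<Sum>j\<in>UNIV - {x0}. pz x0 * (1 - pz j) * \<bar>w\<bar> + pz j * (1 - pz x0) * \<bar>w\<bar>)"
    by (subst sum_distrib_right) (intro sum.cong refl, simp add: algebra_simps)
  also have "\<dots> \<le> (\<Sum>j\<in>UNIV - {x0}. (2 * e) + C * (pz x0 * (1 - pz j) * v x0 j) + C * (pz j * (1 - pz x0) * v j x0))"
  proof (rule sum_mono)
    fix j
    have a: "0 \<le> pz x0 * (1 - pz j)" "pz x0 * (1 - pz j) \<le> 1"
      using p01[of x0] p01[of j] by (auto intro: mult_le_one)
    have b: "0 \<le> pz j * (1 - pz x0)" "pz j * (1 - pz x0) \<le> 1"
      using p01[of x0] p01[of j] by (auto intro: mult_le_one)
    have "pz x0 * (1 - pz j) * \<bar>w\<bar> \<le> pz x0 * (1 - pz j) * (e + C * v x0 j)"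
      using a wv by (intro mult_left_mono) auto
    also have "\<dots> = pz x0 * (1 - pz j) * e + C * (pz x0 * (1 - pz j) * v x0 j)" by (simp add: algebra_simps)
    also have "\<dots> \<le> e + C * (pz x0 * (1 - pz j) * v x0 j)"
      using a e by (simp add: mult_left_le_one_le)
    finally have 1: "pz x0 * (1 - pz j) * \<bar>w\<bar> \<le> e + C * (pz x0 * (1 - pz j) * v x0 j)" .
    have "pz j * (1 - pz x0) * \<bar>w\<bar> \<le> pz j * (1 - pz x0) * (e + C * v j x0)"
      using b wv by (intro mult_left_mono) auto
    also have "\<dots> = pz j * (1 - pz x0) * e + C * (pz j * (1 - pz x0) * v j x0)" by (simp add: algebra_simps)
    also have "\<dots> \<le> e + C * (pz j * (1 - pz x0) * v j x0)"
      using b e by (simp add: mult_left_le_one_le)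
    finally have 2: "pz j * (1 - pz x0) * \<bar>w\<bar> \<le> e + C * (pz j * (1 - pz x0) * v j x0)" .
    show "pz x0 * (1 - pz j) * \<bar>w\<bar> + pz j * (1 - pz x0) * \<bar>w\<bar>
        \<le> 2 * e + C * (pz x0 * (1 - pz j) * v x0 j) + C * (pz j * (1 - pz x0) * v j x0)"
      using 1 2 by linarith
  qed
  finally have "\<bar>S * ((\<Prod>i\<in>UNIV. fz i) * w)\<bar>
      \<le> Bf ^ CARD('k) * (\<Sum>j\<in>UNIV - {x0}. (2 * e) + C * (pz x0 * (1 - pz j) * v x0 j) + C * (pz j * (1 - pz x0) * v j x0))"
    using Bf0 by (simp add: mult_left_mono)
  then show ?thesis unfolding S_def by (simp add: sum_distrib_left algebra_simps)
qed

lemma key_bound: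
  fixes G D :: "('a::polish_space \<times> 'b::euclidean_space) measure" and f :: "'a \<Rightarrow> real"
    and W :: "('k::finite \<Rightarrow> 'b) \<Rightarrow> real" and V :: "'b \<Rightarrow> real"
  assumes sG: "subprob_on G" and sD: "subprob_on D"
    and fc: "continuous_on UNIV f" and fb: "\<And>x. \<bar>f x\<bar> \<le> Bf"
    and Wc: "continuous_on UNIV W" and Wb: "\<And>y. \<bar>W y\<bar> \<le> Mw"
    and Vc: "continuous_on UNIV V" and V0: "\<And>y. 0 \<le> V y" and Vb: "\<And>y. V y \<le> Mv"
    and eps: "0 \<le> e" and C: "0 \<le> C" and WV: "\<And>y a b. \<bar>W y\<bar> \<le> e + C * V (y a - y b)"
  shows "\<bar>(\<integral>z. (\<Prod>i\<in>UNIV. f (fst (z i))) * W (\<lambda>i. snd (z i)) \<partial>(PiM UNIV (\<lambda>_. add_measure G D)))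
          - (\<integral>z. (\<Prod>i\<in>UNIV. f (fst (z i))) * W (\<lambda>i. snd (z i)) \<partial>(PiM UNIV (\<lambda>_. G)))
          - (\<integral>z. (\<Prod>i\<in>UNIV. f (fst (z i))) * W (\<lambda>i. snd (z i)) \<partial>(PiM UNIV (\<lambda>_. D)))\<bar>
     \<le> Bf ^ CARD('k) * real (CARD('k) - 1) * 2 ^ (CARD('k) + 1) * (e + C * (\<integral>w. V (fst w - snd w) \<partial>(marg2 G \<Otimes>\<^sub>M marg2 D)))"
proof -
  define k where "k = CARD('k)"
  define Gf where "Gf z = (\<Prod>i\<in>UNIV. f (fst (z i))) * W (\<lambda>i. snd (z i))" for z :: "'k \<Rightarrow> 'a \<times> 'b"
  define I where "I = (\<integral>w. V (fst w - snd w) \<partial>(marg2 G \<Otimes>\<^sub>M marg2 D))"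
  define mu where "mu = add_measure G D"
  have sGb: "sets G = sets borel" and sDb: "sets D = sets borel"
    and spG: "subprob_space G" and spD: "subprob_space D"
    using sG sD by (auto simp: subprob_on_def)
  have fG: "finite_measure G" using spG by (rule subprob_space.axioms)
  have fD: "finite_measure D" using spD by (rule subprob_space.axioms)
  have sDG: "sets D = sets G" using sGb sDb by simp
  obtain p where pm: "p \<in> borel_measurable G" and p01: "\<And>x. 0 \<le> p x \<and> p x \<le> 1"
    and Gd: "G = density mu (\<lambda>x. ennreal (p x))" and Dd: "D = density mu (\<lambda>x. ennreal (1 - p x))"
    using split_density[OF sDG fG fD] unfolding mu_def by blast
  have smu: "sets mu = sets borel" unfolding mu_def using add_measure_sets[OF sDG] sGb by simp
  have spmu: "space mu = space G" unfolding mu_def using add_measure_sets[OF sDG] by simp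
  have pmu: "p \<in> borel_measurable mu" using pm smu sGb measurable_cong_sets by blast
  have emu: "emeasure mu (space mu) = emeasure G (space G) + emeasure D (space D)"
    unfolding spmu using add_measure_emeasure[OF sDG, of "space G"] sets_eq_imp_space_eq[OF sDG]
    unfolding mu_def by simp
  have eG1: "emeasure G (space G) \<le> 1" using spG by (rule subprob_space.emeasure_space_le_1)
  have eD1: "emeasure D (space D) \<le> 1" using spD by (rule subprob_space.emeasure_space_le_1)
  have emu2: "emeasure mu (space mu) \<le> 2"
  proof -
    have "emeasure mu (space mu) \<le> 1 + 1" unfolding emu using eG1 eD1 by (rule add_mono)
    then show ?thesis by simp
  qed
  have fmu: "finite_measure mu"
  proof (rule finite_measureI)
    show "emeasure mu (space mu) \<noteq> \<infinity>"
    proof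
      assume "emeasure mu (space mu) = \<infinity>"
      with emu2 show False by (simp add: top_unique)
    qed
  qed
  interpret fmu: finite_measure mu by fact
  define m where "m = measure mu (space mu)"
  have m02: "0 \<le> m" "m \<le> 2"
  proof -
    show "0 \<le> m" unfolding m_def by simp
    have "ennreal m \<le> ennreal 2" using emu2 unfolding m_def fmu.emeasure_eq_measure by simp
    then show "m \<le> 2" by (subst (asm) ennreal_le_iff) auto
  qed
  define Pk where "Pk = PiM (UNIV::'k set) (\<lambda>_. mu)"
  interpret fPk: finite_measure Pk unfolding Pk_def by (rule finite_measure_PiM_UNIV[OF fmu])
  have mPk: "measure Pk (space Pk) = m ^ k" unfolding Pk_def m_def k_def by (rule measure_PiM_UNIV[OF fmu])
  have Gfm: "Gf \<in> borel_measurable Pk" unfolding Pk_def Gf_def by (rule Gf_measurable[OF smu fc Wc])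
  note [measurable] = pmu snd_meas_borel[OF smu]
  have Vm[measurable]: "V \<in> borel_measurable borel" using Vc by (rule borel_measurable_continuous_onI)
  have Pm: "(\<lambda>z. \<Prod>i\<in>UNIV. p (z i)) \<in> borel_measurable Pk" unfolding Pk_def by measurable
  have Qm: "(\<lambda>z. \<Prod>i\<in>UNIV. 1 - p (z i)) \<in> borel_measurable Pk" unfolding Pk_def by measurable
  have Bf0: "0 \<le> Bf" using fb[of undefined] by linarith
  have P01: "0 \<le> (\<Prod>i\<in>UNIV. p (z i))" "(\<Prod>i\<in>UNIV. p (z i)) \<le> 1" for z :: "'k \<Rightarrow> 'a \<times> 'b"
    by (rule prod_nonneg, simp add: p01) (rule prod_le_1, simp add: p01)
  have Q01: "0 \<le> (\<Prod>i\<in>UNIV. 1 - p (z i))" "(\<Prod>i\<in>UNIV. 1 - p (z i)) \<le> 1" for z :: "'k \<Rightarrow> 'a \<times> 'b"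
    by (rule prod_nonneg, simp add: p01) (rule prod_le_1, simp add: p01)
  have Gfb: "\<bar>Gf z\<bar> \<le> Bf ^ k * Mw" for z
  proof -
    have fB: "\<bar>\<Prod>i\<in>UNIV. f (fst (z i))\<bar> \<le> Bf ^ k"
      unfolding abs_prod k_def using fb by (subst prod_constant[symmetric]) (intro prod_mono, auto)
    have "\<bar>Gf z\<bar> = \<bar>\<Prod>i\<in>UNIV. f (fst (z i))\<bar> * \<bar>W (\<lambda>i. snd (z i))\<bar>" unfolding Gf_def by (simp add: abs_mult)
    also have "\<dots> \<le> Bf ^ k * Mw" using fB Wb by (intro mult_mono) auto
    finally show ?thesis .
  qed
  have PG: "PiM UNIV (\<lambda>_. G) = density Pk (\<lambda>z. ennreal (\<Prod>i\<in>UNIV. p (z i)))"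
    using PiM_density[OF fmu pmu p01, where 'k='k] unfolding Pk_def by (simp add: Gd[symmetric])
  have p01': "0 \<le> 1 - p x \<and> 1 - p x \<le> 1" for x using p01[of x] by simp
  have hm: "(\<lambda>x. 1 - p x) \<in> borel_measurable mu" by measurable
  have PD: "PiM UNIV (\<lambda>_. D) = density Pk (\<lambda>z. ennreal (\<Prod>i\<in>UNIV. 1 - p (z i)))"
    using PiM_density[OF fmu hm p01', where 'k='k] unfolding Pk_def by (simp add: Dd[symmetric])
  have intG: "(\<integral>z. Gf z \<partial>PiM UNIV (\<lambda>_. G)) = (\<integral>z. (\<Prod>i\<in>UNIV. p (z i)) * Gf z \<partial>Pk)"
    unfolding PG using P01 by (subst integral_density[OF Gfm Pm]) auto
  have intD: "(\<integral>z. Gf z \<partial>PiM UNIV (\<lambda>_. D)) = (\<integral>z. (\<Prod>i\<in>UNIV. 1 - p (z i)) * Gf z \<partial>Pk)"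
    unfolding PD using Q01 by (subst integral_density[OF Gfm Qm]) auto
  have i1: "integrable Pk Gf" using Gfm Gfb by (intro fPk.integrable_const_bound[where B="Bf ^ k * Mw"]) auto
  have i2: "integrable Pk (\<lambda>z. (\<Prod>i\<in>UNIV. p (z i)) * Gf z)"
  proof (intro fPk.integrable_const_bound[where B="Bf ^ k * Mw"])
    show "AE x in Pk. norm ((\<Prod>i\<in>UNIV. p (x i)) * Gf x) \<le> Bf ^ k * Mw"
    proof (rule AE_I2)
      fix x :: "'k \<Rightarrow> 'a \<times> 'b"
      have "\<bar>\<Prod>i\<in>UNIV. p (x i)\<bar> * \<bar>Gf x\<bar> \<le> 1 * (Bf ^ k * Mw)"
        using P01[of x] Gfb[of x] by (intro mult_mono) auto
      then show "norm ((\<Prod>i\<in>UNIV. p (x i)) * Gf x) \<le> Bf ^ k * Mw" by (simp add: abs_mult)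
    qed
  qed (use Pm Gfm in measurable)
  have i3: "integrable Pk (\<lambda>z. (\<Prod>i\<in>UNIV. 1 - p (z i)) * Gf z)"
  proof (intro fPk.integrable_const_bound[where B="Bf ^ k * Mw"])
    show "AE x in Pk. norm ((\<Prod>i\<in>UNIV. 1 - p (x i)) * Gf x) \<le> Bf ^ k * Mw"
    proof (rule AE_I2)
      fix x :: "'k \<Rightarrow> 'a \<times> 'b"
      have "\<bar>\<Prod>i\<in>UNIV. 1 - p (x i)\<bar> * \<bar>Gf x\<bar> \<le> 1 * (Bf ^ k * Mw)"
        using Q01[of x] Gfb[of x] by (intro mult_mono) auto
      then show "norm ((\<Prod>i\<in>UNIV. 1 - p (x i)) * Gf x) \<le> Bf ^ k * Mw" by (simp add: abs_mult)
    qed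
  qed (use Qm Gfm in measurable)
  define h where "h z = (1 - (\<Prod>i\<in>UNIV. p (z i)) - (\<Prod>i\<in>UNIV. 1 - p (z i))) * Gf z" for z
  have diff_eq: "(\<integral>z. Gf z \<partial>Pk) - (\<integral>z. (\<Prod>i\<in>UNIV. p (z i)) * Gf z \<partial>Pk) - (\<integral>z. (\<Prod>i\<in>UNIV. 1 - p (z i)) * Gf z \<partial>Pk)
      = (\<integral>z. h z \<partial>Pk)"
    unfolding h_def using i1 i2 i3
    by (simp add: integral_diff[symmetric] left_diff_distrib)
  define F where "F x y = p x * (1 - p y) * V (snd x - snd y)" for x y
  define x0 where "x0 = (undefined :: 'k)"
  define Bd where "Bd z = (\<Sum>j\<in>UNIV - {x0}. Bf ^ k * (2 * e) + Bf ^ k * C * F (z x0) (z j) + Bf ^ k * C * F (z j) (z x0))" for z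
  have hB: "\<bar>h z\<bar> \<le> Bd z" for z
    unfolding h_def Gf_def Bd_def F_def k_def
    by (rule pointwise_bound[of "\<lambda>i. p (z i)" "\<lambda>i. f (fst (z i))" Bf "W (\<lambda>i. snd (z i))" e C
          "\<lambda>a b. V (snd (z a) - snd (z b))" x0]) (use WV[of "\<lambda>i. snd (z i)"] in \<open>auto simp: p01 fb V0 eps C\<close>)
  have F0: "0 \<le> F x y" for x y unfolding F_def using p01[of x] p01[of y] V0 by simp
  have Fb: "F x y \<le> Mv" for x y
  proof -
    have "F x y \<le> 1 * 1 * V (snd x - snd y)" unfolding F_def
      using p01[of x] p01[of y] V0 by (intro mult_right_mono mult_mono) auto
    also have "\<dots> \<le> Mv" using Vb by simp
    finally show ?thesis .
  qed
  have intF: "integrable Pk (\<lambda>z. F (z a) (z b))" for a b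
  proof (intro fPk.integrable_const_bound[where B=Mv])
    show "(\<lambda>z. F (z a) (z b)) \<in> borel_measurable Pk" unfolding F_def Pk_def by measurable
    show "AE x in Pk. norm (F (x a) (x b)) \<le> Mv" using F0 Fb by simp
  qed
  have intBd: "integrable Pk Bd"
    unfolding Bd_def using intF by simp
  have inth: "integrable Pk h"
  proof -
    have "integrable Pk (\<lambda>z. Gf z - (\<Prod>i\<in>UNIV. p (z i)) * Gf z - (\<Prod>i\<in>UNIV. 1 - p (z i)) * Gf z)"
      using i1 i2 i3 by (intro Bochner_Integration.integrable_diff)
    then show ?thesis unfolding h_def by (simp add: left_diff_distrib)
  qed
  have I0: "0 \<le> I" unfolding I_def using V0 by (intro Bochner_Integration.integral_nonneg) auto
  have tm: "(\<integral>z. F (z a) (z b) \<partial>Pk) = m ^ (k - 2) * I" if "a \<noteq> b" for a b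
    unfolding F_def Pk_def m_def k_def I_def
    by (rule term_eq[OF smu fmu pmu p01 Gd Dd Vc V0 Vb that])
  have "\<bar>(\<integral>z. Gf z \<partial>PiM UNIV (\<lambda>_. add_measure G D)) - (\<integral>z. Gf z \<partial>PiM UNIV (\<lambda>_. G))
        - (\<integral>z. Gf z \<partial>PiM UNIV (\<lambda>_. D))\<bar> = \<bar>\<integral>z. h z \<partial>Pk\<bar>"
    unfolding intG intD diff_eq[symmetric] by (simp add: Pk_def mu_def)
  also have "\<dots> \<le> (\<integral>z. \<bar>h z\<bar> \<partial>Pk)" using integral_norm_bound[of Pk h] by simp
  also have "\<dots> \<le> (\<integral>z. Bd z \<partial>Pk)" using inth intBd hB by (intro integral_mono) auto
  also have "\<dots> = (\<Sum>j\<in>UNIV - {x0}. Bf ^ k * (2 * e) * m ^ k + Bf ^ k * C * (m ^ (k - 2) * I) + Bf ^ k * C * (m ^ (k - 2) * I))"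
    unfolding Bd_def
  proof (subst Bochner_Integration.integral_sum, use intF in simp, intro sum.cong refl)
    fix j assume j: "j \<in> UNIV - {x0}"
    then have "x0 \<noteq> j" "j \<noteq> x0" by auto
    then show "(\<integral>z. Bf ^ k * (2 * e) + Bf ^ k * C * F (z x0) (z j) + Bf ^ k * C * F (z j) (z x0) \<partial>Pk)
      = Bf ^ k * (2 * e) * m ^ k + Bf ^ k * C * (m ^ (k - 2) * I) + Bf ^ k * C * (m ^ (k - 2) * I)"
      using intF tm mPk by (simp add: Bochner_Integration.integral_add)
  qed
  also have "\<dots> \<le> (\<Sum>j\<in>UNIV - {x0}. Bf ^ k * (2 * e) * 2 ^ k + Bf ^ k * C * (2 ^ k * I) + Bf ^ k * C * (2 ^ k * I))"
  proof (rule sum_mono)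
    fix j
    have mk: "m ^ k \<le> 2 ^ k" using m02 by (intro power_mono) auto
    have "m ^ (k - 2) \<le> 2 ^ (k - 2)" using m02 by (intro power_mono) auto
    also have "(2::real) ^ (k - 2) \<le> 2 ^ k" by (intro power_increasing) auto
    finally have mk2: "m ^ (k - 2) \<le> 2 ^ k" .
    have A0: "0 \<le> Bf ^ k" using Bf0 by simp
    have "Bf ^ k * (2 * e) * m ^ k \<le> Bf ^ k * (2 * e) * 2 ^ k"
      using A0 eps mk by (intro mult_left_mono) auto
    moreover have "Bf ^ k * C * (m ^ (k - 2) * I) \<le> Bf ^ k * C * (2 ^ k * I)"
      using A0 C mk2 I0 by (intro mult_left_mono mult_right_mono) auto
    ultimately show "Bf ^ k * (2 * e) * m ^ k + Bf ^ k * C * (m ^ (k - 2) * I) + Bf ^ k * C * (m ^ (k - 2) * I)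
        \<le> Bf ^ k * (2 * e) * 2 ^ k + Bf ^ k * C * (2 ^ k * I) + Bf ^ k * C * (2 ^ k * I)" by linarith
  qed
  also have "\<dots> = real (k - 1) * (Bf ^ k * (2 * e) * 2 ^ k + Bf ^ k * C * (2 ^ k * I) + Bf ^ k * C * (2 ^ k * I))"
    by (simp add: k_def card_Diff_singleton)
  also have "\<dots> = Bf ^ k * real (k - 1) * 2 ^ (k + 1) * (e + C * I)"
    by (simp add: algebra_simps)
  finally show ?thesis unfolding Gf_def k_def I_def .
qed

lemma cont_bounded_on_compact:
  fixes g :: "'x::topological_space \<Rightarrow> real"
  assumes "continuous_on UNIV g" "compact S"
  shows "\<exists>M. \<forall>x\<in>S. \<bar>g x\<bar> \<le> M"
proof -
  have "compact (g ` S)" using assms by (intro compact_continuous_image) (auto intro: continuous_on_subset)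
  then have "bounded (g ` S)" by (rule compact_imp_bounded)
  then obtain M where "\<forall>y\<in>g ` S. norm y \<le> M" by (auto simp: bounded_iff)
  then show ?thesis by auto
qed

lemma V_bounded:
  fixes V :: "'b::euclidean_space \<Rightarrow> real"
  assumes Vc: "continuous_on UNIV V" and Vlim: "(V \<longlongrightarrow> 0) at_infinity"
  shows "\<exists>Mv. \<forall>y. \<bar>V y\<bar> \<le> Mv"
proof -
  have "eventually (\<lambda>y. dist (V y) 0 < 1) at_infinity" using tendstoD[OF Vlim, of 1] by simp
  then obtain b where b: "\<And>y. b \<le> norm y \<Longrightarrow> \<bar>V y\<bar> < 1" by (auto simp: eventually_at_infinity)
  obtain M where M: "\<forall>y\<in>cball 0 b. \<bar>V y\<bar> \<le> M" using cont_bounded_on_compact[OF Vc compact_cball] by blast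
  have "\<bar>V y\<bar> \<le> max M 1" for y
  proof (cases "b \<le> norm y")
    case True then show ?thesis using b[of y] by simp
  next
    case False then have "y \<in> cball 0 b" by simp
    then show ?thesis using M by fastforce
  qed
  then show ?thesis by blast
qed

lemma V_pos_lower:
  fixes V :: "'b::euclidean_space \<Rightarrow> real"
  assumes Vc: "continuous_on UNIV V" and Vp: "\<And>y. V y > 0"
  shows "\<exists>c>0. \<forall>y. norm y \<le> R \<longrightarrow> c \<le> V y"
proof (cases "0 \<le> R")
  case False
  have "\<forall>y. norm (y::'b) \<le> R \<longrightarrow> 1 \<le> V y"
  proof (intro allI impI)
    fix y :: 'b assume "norm y \<le> R"
    then show "1 \<le> V y" using False norm_ge_zero[of y] by linarith
  qed
  then show ?thesis by (intro exI[of _ 1]) auto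
next
  case True
  then have ne: "cball (0::'b) R \<noteq> {}" by auto
  obtain x where x: "x \<in> cball 0 R" "\<forall>y\<in>cball 0 R. V x \<le> V y"
    using continuous_attains_inf[OF compact_cball ne continuous_on_subset[OF Vc]] by auto
  show ?thesis using x Vp[of x] by (intro exI[of _ "V x"]) auto
qed

lemma W_bounded:
  fixes W :: "('k::finite \<Rightarrow> 'b::euclidean_space) \<Rightarrow> real"
  assumes "frakC W"
  shows "\<exists>Mw. \<forall>y. \<bar>W y\<bar> \<le> Mw"
proof -
  have Wc: "continuous_on UNIV W" and Wt: "\<And>y a. W (\<lambda>i. y i + a) = W y"
    and Wd: "\<And>e. e > 0 \<Longrightarrow> \<exists>R. \<forall>y. (\<exists>i j. dist (y i) (y j) > R) \<longrightarrow> \<bar>W y\<bar> < e"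
    using assms unfolding frakC_def by auto
  obtain R where R: "\<And>y. (\<exists>i j. dist (y i) (y j) > R) \<Longrightarrow> \<bar>W y\<bar> < 1" using Wd[of 1] by auto
  define S where "S = PiE (UNIV::'k set) (\<lambda>_. cball (0::'b) R)"
  have "compactin (product_topology (\<lambda>_. euclidean) UNIV) S"
    unfolding S_def by (subst compactin_PiE) auto
  then have cS: "compact S" by (simp add: euclidean_product_topology)
  obtain M where M: "\<forall>x\<in>S. \<bar>W x\<bar> \<le> M" using cont_bounded_on_compact[OF Wc cS] by blast
  have "\<bar>W y\<bar> \<le> max M 1" for y
  proof (cases "\<exists>i j. dist (y i) (y j) > R")
    case True then show ?thesis using R[of y] by simp
  next
    case False
    define i0 where "i0 = (undefined :: 'k)"
    have "(\<lambda>i. y i + (- y i0)) \<in> S"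
      unfolding S_def
    proof (rule PiE_I)
      fix i
      have "\<not> dist (y i) (y i0) > R" using False by blast
      then have "norm (y i - y i0) \<le> R" by (simp add: dist_norm)
      then show "y i + - y i0 \<in> cball 0 R" by simp
    qed simp
    then have "\<bar>W (\<lambda>i. y i + (- y i0))\<bar> \<le> M" using M by blast
    then show ?thesis using Wt[of y "- y i0"] by simp
  qed
  then show ?thesis by blast
qed

lemma WV_bound:
  fixes W :: "('k::finite \<Rightarrow> 'b::euclidean_space) \<Rightarrow> real" and V :: "'b \<Rightarrow> real"
  assumes "frakC W" and Wb: "\<And>y. \<bar>W y\<bar> \<le> Mw" and Vc: "continuous_on UNIV V" and Vp: "\<And>y. V y > 0"
    and e: "e > 0"
  shows "\<exists>C\<ge>0. \<forall>y a b. \<bar>W y\<bar> \<le> e + C * V (y a - y b)"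
proof -
  obtain R where R: "\<And>y. (\<exists>i j. dist (y i) (y j) > R) \<Longrightarrow> \<bar>W y\<bar> < e"
    using assms(1) e unfolding frakC_def by blast
  obtain c where c: "c > 0" "\<And>y. norm y \<le> R \<Longrightarrow> c \<le> V y" using V_pos_lower[OF Vc Vp, of R] by blast
  have Mw0: "0 \<le> Mw" using Wb[of undefined] by linarith
  have "\<bar>W y\<bar> \<le> e + (Mw / c) * V (y a - y b)" for y a b
  proof (cases "dist (y a) (y b) > R")
    case True
    then have "\<bar>W y\<bar> < e" using R by blast
    moreover have "0 \<le> (Mw / c) * V (y a - y b)" using Mw0 c Vp[of "y a - y b"] by simp
    ultimately show ?thesis by linarith
  next
    case False
    then have "c \<le> V (y a - y b)" using c(2) by (simp add: dist_norm)
    then have "Mw / c * c \<le> Mw / c * V (y a - y b)" using Mw0 c by (intro mult_left_mono) auto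
    then have "Mw \<le> Mw / c * V (y a - y b)" using c by simp
    then show ?thesis using Wb[of y] e by linarith
  qed
  then show ?thesis using Mw0 c by (intro exI[of _ "Mw / c"]) auto
qed

lemma lim_lemma:
  fixes a I :: "nat \<Rightarrow> real"
  assumes K: "0 \<le> K" and I: "I \<longlonglongrightarrow> 0"
    and bnd: "\<And>e. e > 0 \<Longrightarrow> \<exists>C\<ge>0. \<forall>n. \<bar>a n\<bar> \<le> K * (e + C * I n)"
  shows "(\<lambda>n. \<bar>a n\<bar>) \<longlonglongrightarrow> 0"
proof (rule LIMSEQ_I)
  fix r :: real assume r: "0 < r"
  define e where "e = r / (2 * (K + 1))"
  have e0: "e > 0" unfolding e_def using r K by simp
  obtain C where C: "C \<ge> 0" "\<And>n. \<bar>a n\<bar> \<le> K * (e + C * I n)" using bnd[OF e0] by blast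
  define d where "d = r / (2 * (K + 1)) / (C + 1)"
  have d0: "d > 0" unfolding d_def using r K C by simp
  obtain N where N: "\<And>n. n \<ge> N \<Longrightarrow> norm (I n - 0) < d" using LIMSEQ_D[OF I d0] by blast
  have "norm (\<bar>a n\<bar> - 0) < r" if n: "n \<ge> N" for n
  proof -
    have In: "\<bar>I n\<bar> < d" using N[OF n] by simp
    have "K * e \<le> (K + 1) * e" using e0 by simp
    also have "\<dots> = r / 2" unfolding e_def using K by (simp add: field_simps)
    finally have 1: "K * e \<le> r / 2" .
    have "C * I n \<le> C * d" using C(1) In by (intro mult_left_mono) auto
    also have "\<dots> \<le> (C + 1) * d" using d0 by simp
    also have "\<dots> = r / (2 * (K + 1))" unfolding d_def using C(1) by simp
    finally have "K * (C * I n) \<le> K * (r / (2 * (K + 1)))" using K by (intro mult_left_mono) auto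
    also have "\<dots> < r / 2" using K r by (simp add: field_simps)
    finally have 2: "K * (C * I n) < r / 2" .
    have "\<bar>a n\<bar> \<le> K * e + K * (C * I n)" using C(2)[of n] by (simp add: algebra_simps)
    then show ?thesis using 1 2 by simp
  qed
  then show "\<exists>no. \<forall>n\<ge>no. norm (\<bar>a n\<bar> - 0) < r" by blast
qed

theorem lemma2p4:
  fixes \<gamma> \<delta> :: "nat \<Rightarrow> ('a::polish_space \<times> 'b::euclidean_space) measure"
    and f :: "'a \<Rightarrow> real"
    and W :: "('k::finite \<Rightarrow> 'b) \<Rightarrow> real"
  assumes "\<And>n. subprob_on (\<gamma> n)" and "\<And>n. subprob_on (\<delta> n)"
    and "widely_separated \<gamma> \<delta>"
    and "continuous_on UNIV f" and "bounded (range f)"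
    and "CARD('k) \<ge> 2" and "frakC W"
  shows "(\<lambda>n. \<bar>(\<integral>z. (\<Prod>i\<in>UNIV. f (fst (z i))) * W (\<lambda>i. snd (z i))
                    \<partial>(PiM UNIV (\<lambda>_. add_measure (\<gamma> n) (\<delta> n))))
              - (\<integral>z. (\<Prod>i\<in>UNIV. f (fst (z i))) * W (\<lambda>i. snd (z i)) \<partial>(PiM UNIV (\<lambda>_. \<gamma> n)))
              - (\<integral>z. (\<Prod>i\<in>UNIV. f (fst (z i))) * W (\<lambda>i. snd (z i)) \<partial>(PiM UNIV (\<lambda>_. \<delta> n)))\<bar>)
         \<longlonglongrightarrow> 0"
proof -
  obtain V :: "'b \<Rightarrow> real" where Vc: "continuous_on UNIV V" and Vp: "\<And>y. V y > 0"
    and Vlim: "(V \<longlongrightarrow> 0) at_infinity"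
    and Ilim: "(\<lambda>n. \<integral>p. V (fst p - snd p) \<partial>(marg2 (\<gamma> n) \<Otimes>\<^sub>M marg2 (\<delta> n))) \<longlonglongrightarrow> 0"
    using assms(3) unfolding widely_separated_def by blast
  obtain Bf where fb: "\<And>x. \<bar>f x\<bar> \<le> Bf"
    using assms(5) unfolding bounded_iff by auto
  have Bf0: "0 \<le> Bf" using fb[of undefined] by linarith
  have Wc: "continuous_on UNIV W" using assms(7) unfolding frakC_def by blast
  obtain Mw where Mw: "\<And>y. \<bar>W y\<bar> \<le> Mw" using W_bounded[OF assms(7)] by blast
  obtain Mv where Mv': "\<And>y. \<bar>V y\<bar> \<le> Mv" using V_bounded[OF Vc Vlim] by blast
  have Mv: "V y \<le> Mv" for y using Mv'[of y] by linarith
  have V0: "0 \<le> V y" for y using Vp[of y] by linarith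
  define K where "K = Bf ^ CARD('k) * real (CARD('k) - 1) * 2 ^ (CARD('k) + 1)"
  have K0: "0 \<le> K" unfolding K_def using Bf0 by simp
  show ?thesis
  proof (rule lim_lemma[OF K0 Ilim])
    fix e :: real assume e: "e > 0"
    obtain C where C: "C \<ge> 0" "\<And>y a b. \<bar>W y\<bar> \<le> e + C * V (y a - y b)"
      using WV_bound[OF assms(7) Mw Vc Vp e] by blast
    show "\<exists>C\<ge>0. \<forall>n. \<bar>(\<integral>z. (\<Prod>i\<in>UNIV. f (fst (z i))) * W (\<lambda>i. snd (z i))
                    \<partial>(PiM UNIV (\<lambda>_. add_measure (\<gamma> n) (\<delta> n))))
              - (\<integral>z. (\<Prod>i\<in>UNIV. f (fst (z i))) * W (\<lambda>i. snd (z i)) \<partial>(PiM UNIV (\<lambda>_. \<gamma> n)))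
              - (\<integral>z. (\<Prod>i\<in>UNIV. f (fst (z i))) * W (\<lambda>i. snd (z i)) \<partial>(PiM UNIV (\<lambda>_. \<delta> n)))\<bar>
          \<le> K * (e + C * (\<integral>p. V (fst p - snd p) \<partial>(marg2 (\<gamma> n) \<Otimes>\<^sub>M marg2 (\<delta> n))))"
    proof (intro exI[of _ C] conjI allI)
      show "0 \<le> C" by fact
      fix n
      show "\<bar>(\<integral>z. (\<Prod>i\<in>UNIV. f (fst (z i))) * W (\<lambda>i. snd (z i))
                    \<partial>(PiM UNIV (\<lambda>_. add_measure (\<gamma> n) (\<delta> n))))
              - (\<integral>z. (\<Prod>i\<in>UNIV. f (fst (z i))) * W (\<lambda>i. snd (z i)) \<partial>(PiM UNIV (\<lambda>_. \<gamma> n)))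
              - (\<integral>z. (\<Prod>i\<in>UNIV. f (fst (z i))) * W (\<lambda>i. snd (z i)) \<partial>(PiM UNIV (\<lambda>_. \<delta> n)))\<bar>
          \<le> K * (e + C * (\<integral>p. V (fst p - snd p) \<partial>(marg2 (\<gamma> n) \<Otimes>\<^sub>M marg2 (\<delta> n))))"
        unfolding K_def
        by (rule key_bound[OF assms(1) assms(2) assms(4) fb Wc Mw Vc V0 Mv _ C(1) C(2)]) (use e in simp)
    qed
  qed
qed

end
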